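(* Fix a step $h$ and write $\widehat{\Theta}_0:=\widehat{\Theta}_0^\top(h)=\frac1K\sum_{t=1}^T\Psi_{t}^\top Y_{t}e_t^\top\in\mathbb{R}^{d\times T}$ and $\sigma^\star_{\min}:=\sigma^\star_{\min}(h)$. There is an absolute constant $c>0$ such that for every $\delta_0>0$, with probability at least $1-\exp\!\big[(T+d)-c\,\epsilon_3^2\delta_0^2K\frac{\zeta^4}{d^2}\sigma^{\star2}_{\min}\big]$ with $\epsilon_3=0.1$, $$\big\|\widehat{\Theta}_0-\mathbb{E}[\widehat{\Theta}_0]\big\|\le 0.1\,\delta_0\frac{\zeta^2}{d}\sigma^\star_{\min},$$ where $\|\cdot\|$ is the spectral norm.
   Context: Setting: $T$ tasks, each a finite-horizon episodic MDP with common finite state space, finite action space, horizon $H$, common transitions, and deterministic rewards $R_{ht}(s,a)=\langle\theta^\star_{ht},\psi(s,a)\rangle\in[0,1]$, with $\psi:\mathcal S\times\mathcal A\to\mathbb{R}^d$, $\|\psi(s,a)\|\le1$, $\|\theta^\star_{ht}\|\le\sqrt d$. $\Theta^\star_h\in\mathbb{R}^{T\times d}$ has $t$-th row $\theta^{\star\top}_{ht}$, rank $r\le\frac12\min(T,d)$, and $\sigma^\star_{\min}(h)$ is its smallest nonzero singular value. For each task $t$ and $k=1,\dots,K$ one episode is run under a fixed exploration policy; at step $h$ one records $\psi_{tk}=\psi(s_h,a_h)$ and $y_{tk}=\langle\theta^\star_{ht},\psi_{tk}\rangle$. $Y_t=[y_{t1},\dots,y_{tK}]^\top$, $\Psi_t\in\mathbb{R}^{K\times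 d}$ has rows $\psi_{tk}^\top$, $e_t\in\mathbb{R}^T$ standard basis vector. The exploration policy is such that the $\psi_{tk}$ are i.i.d. with $\|\psi_{tk}\|\le1$ a.s. and there exist $\zeta,\xi>0$ with $\mathbb{E}|\langle\psi_{tk},x\rangle|\ge\zeta/\sqrt d$ and $\mathbb{E}[\psi_{tk}\psi_{tk}^\top]\preceq\frac{1}{d\xi^2}I$ for all unit $x\in\mathbb{R}^d$. *)

theory Defs
  imports "HOL-Probability.Probability" "Jordan_Normal_Form.Matrix" "Jordan_Normal_Form.Char_Poly"
    "Jordan_Normal_Form.DL_Rank"
begin

definition vnorm :: "real vec \<Rightarrow> real" where
  "vnorm v = sqrt (scalar_prod v v)"

definition spec_norm :: "real mat \<Rightarrow> real" where
  "spec_norm M = Sup {vnorm (M *\<^sub>v x) | x. x \<in> carrier_vec (dim_col M) \<and> vnorm x \<le> 1}"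

definition singular_value :: "real mat \<Rightarrow> real \<Rightarrow> bool" where
  "singular_value M s \<longleftrightarrow> s \<ge> 0 \<and> eigenvalue (transpose_mat M * M) (s\<^sup>2)"

definition sigma_min :: "real mat \<Rightarrow> real" where
  "sigma_min M = Min {s. singular_value M s \<and> s \<noteq> 0}"

definition mat_rank :: "nat \<Rightarrow> real mat \<Rightarrow> nat" where
  "mat_rank n A = vec_space.rank n (A :: real mat)"

definition loewner_le :: "nat \<Rightarrow> real mat \<Rightarrow> real mat \<Rightarrow> bool" where
  "loewner_le n A B \<longleftrightarrow> (\<forall>x\<in>carrier_vec n. scalar_prod x ((B - A) *\<^sub>v x) \<ge> 0)"

definition second_moment :: "nat \<Rightarrow> real vec pmf \<Rightarrow> real mat" where
  "second_moment d D = mat d d (\<lambda>(i,j). measure_pmf.expectation D (\<lambda>v. v $ i * v $ j))"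

definition sample_space :: "nat \<Rightarrow> nat \<Rightarrow> nat \<Rightarrow> real vec pmf \<Rightarrow> (nat \<times> nat \<Rightarrow> real vec) pmf" where
  "sample_space d T K D = Pi_pmf ({..<T} \<times> {..<K}) (0\<^sub>v d) (\<lambda>_. D)"

text \<open>The initial estimator (d x T): column t is (1/K) Psi_t^T Y_t, with
  y_tk = <theta*_t, psi_tk>, theta*_t the t-th row of Theta*.\<close>
definition Theta0_hat :: "nat \<Rightarrow> nat \<Rightarrow> nat \<Rightarrow> real mat \<Rightarrow> (nat \<times> nat \<Rightarrow> real vec) \<Rightarrow> real mat" where
  "Theta0_hat d T K Ths \<omega> = mat d T (\<lambda>(i,t).
     (1 / real K) * (\<Sum>k<K. (\<omega> (t,k) $ i) * scalar_prod (row Ths t) (\<omega> (t,k))))"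

definition Theta0_mean :: "nat \<Rightarrow> nat \<Rightarrow> nat \<Rightarrow> real vec pmf \<Rightarrow> real mat \<Rightarrow> real mat" where
  "Theta0_mean d T K D Ths = mat d T (\<lambda>(i,t).
     measure_pmf.expectation (sample_space d T K D) (\<lambda>\<omega>. Theta0_hat d T K Ths \<omega> $$ (i,t)))"

end

theory Submission
  imports Defs
begin

unbundle no vec_syntax
unbundle no inner_syntax

lemma sp_sum: "y \<in> carrier_vec n \<Longrightarrow> x \<bullet> y = (\<Sum>i<n. x $ i * y $ i)"
  unfolding scalar_prod_def by (simp add: atLeast0LessThan)

lemma sp_self_nonneg: "(x::real vec) \<bullet> x \<ge> 0"
  unfolding scalar_prod_def by (auto intro!: sum_nonneg)

lemma vnorm_nonneg: "vnorm x \<ge> 0"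
  unfolding vnorm_def using sp_self_nonneg[of x] by simp

lemma vnorm_sq: "(vnorm x)\<^sup>2 = x \<bullet> x"
  unfolding vnorm_def using sp_self_nonneg by simp

lemma vnorm_zero_iff: assumes "x \<in> carrier_vec n" shows "vnorm x = 0 \<longleftrightarrow> x = 0\<^sub>v n"
proof
  assume "vnorm x = 0"
  hence "x \<bullet> x = 0" using vnorm_sq[of x] by simp
  hence "(\<Sum>i<n. x $ i * x $ i) = 0" using sp_sum[OF assms] by simp
  hence "\<forall>i\<in>{..<n}. x $ i * x $ i = 0"
    by (subst (asm) sum_nonneg_eq_0_iff) auto
  thus "x = 0\<^sub>v n" using assms by (intro eq_vecI) auto
qed (simp add: vnorm_def)

lemma CS: assumes "x \<in> carrier_vec n" "y \<in> carrier_vec n"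
  shows "\<bar>x \<bullet> y\<bar> \<le> vnorm x * vnorm y"
proof -
  have "(x \<bullet> y)\<^sup>2 \<le> (x \<bullet> x) * (y \<bullet> y)"
    using Cauchy_Schwarz_ineq_sum[of "\<lambda>i. x $ i" "\<lambda>i. y $ i" "{..<n}"]
    by (simp add: sp_sum[OF assms(1)] sp_sum[OF assms(2)] power2_eq_square)
  hence "sqrt ((x \<bullet> y)\<^sup>2) \<le> sqrt ((x \<bullet> x) * (y \<bullet> y))" by (rule real_sqrt_le_mono)
  thus ?thesis unfolding vnorm_def by (simp add: real_sqrt_mult)
qed

lemma CS': assumes "x \<in> carrier_vec n" "y \<in> carrier_vec n"
  shows "x \<bullet> y \<le> vnorm x * vnorm y"
  using CS[OF assms] by linarith

lemma vnorm_smult: "vnorm (c \<cdot>\<^sub>v x) = \<bar>c\<bar> * vnorm (x::real vec)"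
proof -
  have "(c \<cdot>\<^sub>v x) \<bullet> (c \<cdot>\<^sub>v x) = c\<^sup>2 * (x \<bullet> x)"
    by (simp add: power2_eq_square)
  thus ?thesis unfolding vnorm_def by (simp add: real_sqrt_mult)
qed

lemma vnorm_add: assumes "x \<in> carrier_vec n" "y \<in> carrier_vec n"
  shows "vnorm (x + y) \<le> vnorm x + vnorm y"
proof -
  have "(x + y) \<bullet> (x + y) = x \<bullet> x + 2 * (x \<bullet> y) + y \<bullet> y"
    using assms by (simp add: add_scalar_prod_distrib scalar_prod_add_distrib comm_scalar_prod[of x n y])
  also have "\<dots> \<le> (vnorm x)\<^sup>2 + 2 * (vnorm x * vnorm y) + (vnorm y)\<^sup>2"
    using CS'[OF assms] by (simp add: vnorm_sq)
  also have "\<dots> = (vnorm x + vnorm y)\<^sup>2" by (simp add: power2_eq_square algebra_simps)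
  finally have "(vnorm (x+y))\<^sup>2 \<le> (vnorm x + vnorm y)\<^sup>2" by (simp add: vnorm_sq)
  thus ?thesis using vnorm_nonneg[of x] vnorm_nonneg[of y] vnorm_nonneg[of "x+y"]
    by (meson power2_le_imp_le add_nonneg_nonneg)
qed

definition frob :: "real mat \<Rightarrow> real" where
  "frob A = sqrt (\<Sum>i<dim_row A. \<Sum>j<dim_col A. (A $$ (i,j))\<^sup>2)"

lemma frob_nonneg: "frob A \<ge> 0" unfolding frob_def by (auto intro!: sum_nonneg)

lemma vnorm_mult_le: assumes A: "A \<in> carrier_mat m n" and x: "x \<in> carrier_vec n"
  shows "vnorm (A *\<^sub>v x) \<le> frob A * vnorm x"
proof -
  have "(A *\<^sub>v x) \<bullet> (A *\<^sub>v x) = (\<Sum>i<m. (row A i \<bullet> x)\<^sup>2)"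
    using A x by (subst sp_sum[of _ m]) (auto simp: power2_eq_square)
  also have "\<dots> \<le> (\<Sum>i<m. (row A i \<bullet> row A i) * (x \<bullet> x))"
  proof (rule sum_mono)
    fix i assume "i \<in> {..<m}"
    have r: "row A i \<in> carrier_vec n" using A by auto
    have "\<bar>row A i \<bullet> x\<bar> \<le> vnorm (row A i) * vnorm x" by (rule CS[OF r x])
    hence "\<bar>row A i \<bullet> x\<bar>\<^sup>2 \<le> (vnorm (row A i) * vnorm x)\<^sup>2"
      by (intro power_mono) auto
    thus "(row A i \<bullet> x)\<^sup>2 \<le> (row A i \<bullet> row A i) * (x \<bullet> x)"
      by (simp add: power_mult_distrib vnorm_sq)
  qed
  also have "\<dots> = (\<Sum>i<m. \<Sum>j<n. (A $$ (i,j))\<^sup>2) * (x \<bullet> x)"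
    unfolding sum_distrib_right
    using A by (intro sum.cong refl) (auto simp: sp_sum[of _ n] power2_eq_square sum_distrib_right)
  also have "\<dots> = (frob A * vnorm x)\<^sup>2"
    unfolding frob_def using A
    by (simp add: power_mult_distrib vnorm_sq sum_nonneg)
  finally have "(vnorm (A *\<^sub>v x))\<^sup>2 \<le> (frob A * vnorm x)\<^sup>2" by (simp add: vnorm_sq)
  thus ?thesis using frob_nonneg[of A] vnorm_nonneg[of x]
    by (meson power2_le_imp_le mult_nonneg_nonneg)
qed


lemma spec_set_bdd: assumes M: "M \<in> carrier_mat m n"
  shows "bdd_above {vnorm (M *\<^sub>v x) | x. x \<in> carrier_vec (dim_col M) \<and> vnorm x \<le> 1}"
proof (rule bdd_aboveI[of _ "frob M"])
  fix y assume "y \<in> {vnorm (M *\<^sub>v x) | x. x \<in> carrier_vec (dim_col M) \<and> vnorm x \<le> 1}"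
  then obtain x where x: "x \<in> carrier_vec n" "vnorm x \<le> 1" and y: "y = vnorm (M *\<^sub>v x)"
    using M by auto
  have "y \<le> frob M * vnorm x" using vnorm_mult_le[OF M x(1)] y by simp
  also have "\<dots> \<le> frob M" using x(2) frob_nonneg[of M] vnorm_nonneg[of x]
    by (simp add: mult_left_le)
  finally show "y \<le> frob M" .
qed

lemma spec_upper: assumes M: "M \<in> carrier_mat m n" and x: "x \<in> carrier_vec n" "vnorm x \<le> 1"
  shows "vnorm (M *\<^sub>v x) \<le> spec_norm M"
  unfolding spec_norm_def
  by (rule cSup_upper[OF _ spec_set_bdd[OF M]]) (use M x in auto)

lemma spec_nonneg: assumes M: "M \<in> carrier_mat m n" shows "spec_norm M \<ge> 0"
proof -
  have "vnorm (M *\<^sub>v 0\<^sub>v n) \<le> spec_norm M"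
    by (rule spec_upper[OF M]) (auto simp: vnorm_def)
  thus ?thesis using vnorm_nonneg order_trans by blast
qed

lemma spec_scale: assumes M: "M \<in> carrier_mat m n" and x: "x \<in> carrier_vec n"
  shows "vnorm (M *\<^sub>v x) \<le> spec_norm M * vnorm x"
proof (cases "vnorm x = 0")
  case True
  hence "x = 0\<^sub>v n" using vnorm_zero_iff[OF x] by simp
  hence "M *\<^sub>v x = 0\<^sub>v m" using M by auto
  hence "vnorm (M *\<^sub>v x) = 0" by (simp add: vnorm_def)
  thus ?thesis using True by simp
next
  case False
  hence pos: "vnorm x > 0" using vnorm_nonneg[of x] by simp
  let ?y = "(1 / vnorm x) \<cdot>\<^sub>v x"
  have y: "?y \<in> carrier_vec n" "vnorm ?y \<le> 1"
    using x pos by (auto simp: vnorm_smult)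
  have "M *\<^sub>v ?y = (1 / vnorm x) \<cdot>\<^sub>v (M *\<^sub>v x)" by (rule mult_mat_vec[OF M x])
  hence "vnorm (M *\<^sub>v ?y) = vnorm (M *\<^sub>v x) / vnorm x" using pos by (simp add: vnorm_smult)
  moreover have "vnorm (M *\<^sub>v ?y) \<le> spec_norm M" by (rule spec_upper[OF M y])
  ultimately show ?thesis using pos by (simp add: divide_le_eq)
qed

lemma spec_least: assumes M: "M \<in> carrier_mat m n"
  and B: "\<And>x. x \<in> carrier_vec n \<Longrightarrow> vnorm x \<le> 1 \<Longrightarrow> vnorm (M *\<^sub>v x) \<le> B"
  shows "spec_norm M \<le> B"
  unfolding spec_norm_def
proof (rule cSup_least)
  show "{vnorm (M *\<^sub>v x) |x. x \<in> carrier_vec (dim_col M) \<and> vnorm x \<le> 1} \<noteq> {}"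
  proof -
    have "vnorm (M *\<^sub>v 0\<^sub>v n) \<in> {vnorm (M *\<^sub>v x) |x. x \<in> carrier_vec (dim_col M) \<and> vnorm x \<le> 1}"
      by (rule CollectI, rule exI[of _ "0\<^sub>v n"]) (use M in \<open>auto simp: vnorm_def\<close>)
    thus ?thesis by blast
  qed
qed (use M B in auto)

definition is_net :: "nat \<Rightarrow> real vec set \<Rightarrow> bool" where
  "is_net n N \<longleftrightarrow> finite N \<and> N \<subseteq> carrier_vec n \<and> (\<forall>y\<in>N. vnorm y \<le> 5/4) \<and>
     (\<forall>x\<in>carrier_vec n. vnorm x \<le> 1 \<longrightarrow> (\<exists>y\<in>N. vnorm (x - y) \<le> 1/4))"

lemma net_spec_bound:
  assumes M: "M \<in> carrier_mat m n" and Nm: "is_net m Nm" and Nn: "is_net n Nn"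
    and s: "s \<ge> 0"
    and H: "\<And>u v. u \<in> Nm \<Longrightarrow> v \<in> Nn \<Longrightarrow> u \<bullet> (M *\<^sub>v v) \<le> s"
  shows "spec_norm M \<le> 16/7 * s"
proof -
  define L where "L = spec_norm M"
  have L0: "L \<ge> 0" unfolding L_def by (rule spec_nonneg[OF M])
  have key: "vnorm (M *\<^sub>v x) \<le> s + 9/16 * L" if x: "x \<in> carrier_vec n" "vnorm x \<le> 1" for x
  proof -
    define w where "w = M *\<^sub>v x"
    have w: "w \<in> carrier_vec m" using M x unfolding w_def by auto
    have wL: "vnorm w \<le> L" unfolding w_def L_def by (rule spec_upper[OF M x])
    show ?thesis
    proof (cases "vnorm w = 0")
      case True thus ?thesis using s L0 unfolding w_def by simp
    next
      case False
      hence pos: "vnorm w > 0" using vnorm_nonneg[of w] by simp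
      define u where "u = (1 / vnorm w) \<cdot>\<^sub>v w"
      have u: "u \<in> carrier_vec m" "vnorm u \<le> 1" using w pos by (auto simp: u_def vnorm_smult)
      have uw: "u \<bullet> w = vnorm w"
        using pos unfolding u_def by (simp add: vnorm_sq[symmetric] power2_eq_square)
      obtain u' where u': "u' \<in> Nm" "vnorm (u - u') \<le> 1/4" using Nm u unfolding is_net_def by blast
      obtain x' where x': "x' \<in> Nn" "vnorm (x - x') \<le> 1/4" using Nn x unfolding is_net_def by blast
      have u'c: "u' \<in> carrier_vec m" "vnorm u' \<le> 5/4" using Nm u' unfolding is_net_def by auto
      have x'c: "x' \<in> carrier_vec n" using Nn x' unfolding is_net_def by auto
      have dx: "x - x' \<in> carrier_vec n" using x x'c by auto
      have du: "u - u' \<in> carrier_vec m" using u u'c by auto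
      have Mx: "w = M *\<^sub>v x' + M *\<^sub>v (x - x')"
        unfolding w_def using M x x'c by (simp add: mult_minus_distrib_mat_vec, intro eq_vecI, auto)
      have "u \<bullet> w = (u - u') \<bullet> w + u' \<bullet> w"
        using u u'c w by (simp add: minus_scalar_prod_distrib)
      also have "u' \<bullet> w = u' \<bullet> (M *\<^sub>v x') + u' \<bullet> (M *\<^sub>v (x - x'))"
        unfolding Mx using M u'c x'c dx by (simp add: scalar_prod_add_distrib[of _ m])
      finally have eq: "vnorm w = (u - u') \<bullet> w + u' \<bullet> (M *\<^sub>v x') + u' \<bullet> (M *\<^sub>v (x - x'))"
        using uw by simp
      have b1: "(u - u') \<bullet> w \<le> 1/4 * L"
      proof -
        have "(u - u') \<bullet> w \<le> vnorm (u - u') * vnorm w" by (rule CS'[OF du w])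
        also have "\<dots> \<le> 1/4 * L" using u'(2) wL vnorm_nonneg[of w] vnorm_nonneg[of "u-u'"]
          by (intro mult_mono) auto
        finally show ?thesis .
      qed
      have b2: "u' \<bullet> (M *\<^sub>v x') \<le> s" using H u'(1) x'(1) by blast
      have b3: "u' \<bullet> (M *\<^sub>v (x - x')) \<le> 5/4 * (L * (1/4))"
      proof -
        have Md: "M *\<^sub>v (x - x') \<in> carrier_vec m" using M dx by auto
        have c1: "u' \<bullet> (M *\<^sub>v (x - x')) \<le> vnorm u' * vnorm (M *\<^sub>v (x - x'))" by (rule CS'[OF u'c(1) Md])
        have c2: "vnorm (M *\<^sub>v (x - x')) \<le> L * vnorm (x - x')" unfolding L_def by (rule spec_scale[OF M dx])
        have c3: "L * vnorm (x - x') \<le> L * (1/4)" using x'(2) L0 by (intro mult_left_mono) auto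
        have "vnorm u' * vnorm (M *\<^sub>v (x - x')) \<le> 5/4 * (L * (1/4))"
          using c2 c3 u'c(2) vnorm_nonneg[of u'] vnorm_nonneg[of "M *\<^sub>v (x - x')"] L0
          by (intro mult_mono) auto
        thus ?thesis using c1 by linarith
      qed
      show ?thesis using eq b1 b2 b3 unfolding w_def by simp
    qed
  qed
  have "L \<le> s + 9/16 * L" unfolding L_def by (rule spec_least[OF M key[unfolded L_def]])
  thus ?thesis unfolding L_def by simp
qed


definition Zs :: "nat \<Rightarrow> nat \<Rightarrow> int list set" where
  "Zs n L = {zs. length zs = n \<and> sum_list (map abs zs) \<le> int L}"

lemma sl_nonneg: "0 \<le> sum_list (map abs (zs::int list))"
  by (induction zs) auto

lemma abs_le_sum_list: "x \<in> set zs \<Longrightarrow> \<bar>x\<bar> \<le> sum_list (map abs (zs::int list))"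
  by (induction zs) (auto simp: sl_nonneg add_increasing2 add_increasing)

lemma Zs_finite: "finite (Zs n L)"
proof -
  have "Zs n L \<subseteq> {xs. set xs \<subseteq> {- int L..int L} \<and> length xs = n}"
    unfolding Zs_def using abs_le_sum_list by fastforce
  thus ?thesis using finite_lists_length_eq[of "{- int L..int L}" n] finite_subset by blast
qed

lemma Zs_0: "Zs 0 L = {[]}" unfolding Zs_def by auto

lemma Zs_Suc_0: "Zs (Suc n) 0 \<subseteq> Cons 0 ` Zs n 0"
proof
  fix zs assume "zs \<in> Zs (Suc n) 0"
  then obtain a r where zs: "zs = a # r" "length r = n" "\<bar>a\<bar> + sum_list (map abs r) \<le> 0"
    unfolding Zs_def by (cases zs) auto
  have "sum_list (map abs r) \<ge> 0" by (induction r) auto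
  hence "a = 0" "sum_list (map abs r) \<le> 0" using zs(3) by auto
  thus "zs \<in> Cons 0 ` Zs n 0" using zs unfolding Zs_def by auto
qed

lemma Zs_Suc_Suc: "Zs (Suc n) (Suc L) \<subseteq> Cons 0 ` Zs n (Suc L) \<union>
   (\<lambda>zs. (hd zs + 1) # tl zs) ` Zs (Suc n) L \<union> (\<lambda>zs. (hd zs - 1) # tl zs) ` Zs (Suc n) L"
proof
  fix zs assume "zs \<in> Zs (Suc n) (Suc L)"
  then obtain a r where zs: "zs = a # r" "length r = n" "\<bar>a\<bar> + sum_list (map abs r) \<le> int L + 1"
    unfolding Zs_def by (cases zs) auto
  consider "a = 0" | "a > 0" | "a < 0" by linarith
  thus "zs \<in> Cons 0 ` Zs n (Suc L) \<union>
   (\<lambda>zs. (hd zs + 1) # tl zs) ` Zs (Suc n) L \<union> (\<lambda>zs. (hd zs - 1) # tl zs) ` Zs (Suc n) L"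
  proof cases
    case 1 thus ?thesis using zs unfolding Zs_def by auto
  next
    case 2
    have "(a - 1) # r \<in> Zs (Suc n) L" using zs 2 unfolding Zs_def by auto
    moreover have "zs = (\<lambda>zs. (hd zs + 1) # tl zs) ((a - 1) # r)" using zs by simp
    ultimately show ?thesis by blast
  next
    case 3
    have "(a + 1) # r \<in> Zs (Suc n) L" using zs 3 unfolding Zs_def by auto
    moreover have "zs = (\<lambda>zs. (hd zs - 1) # tl zs) ((a + 1) # r)" using zs by simp
    ultimately show ?thesis by blast
  qed
qed

lemma Zs_card: "card (Zs n L) \<le> 3 ^ (n + L)"
proof (induction n arbitrary: L)
  case 0 thus ?case by (simp add: Zs_0)
next
  case (Suc n)
  note IH = Suc.IH
  show ?case
  proof (induction L)
    case 0
    have "card (Zs (Suc n) 0) \<le> card (Cons 0 ` Zs n 0)"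
      by (rule card_mono[OF _ Zs_Suc_0]) (simp add: Zs_finite)
    also have "\<dots> \<le> card (Zs n 0)" by (rule card_image_le[OF Zs_finite])
    also have "\<dots> \<le> 3 ^ n" using IH[of 0] by simp
    also have "\<dots> \<le> 3 ^ (Suc n + 0)" by simp
    finally show ?case .
  next
    case (Suc L)
    let ?A = "Cons 0 ` Zs n (Suc L)"
    let ?B = "(\<lambda>zs. (hd zs + 1) # tl zs) ` Zs (Suc n) L"
    let ?C = "(\<lambda>zs. (hd zs - 1) # tl zs) ` Zs (Suc n) L"
    have fin: "finite ?A" "finite ?B" "finite ?C" by (auto simp: Zs_finite)
    have "card (Zs (Suc n) (Suc L)) \<le> card (?A \<union> ?B \<union> ?C)"
      by (rule card_mono[OF _ Zs_Suc_Suc]) (use fin in auto)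
    also have "\<dots> \<le> card ?A + card ?B + card ?C"
      by (meson card_Un_le add_le_mono order_trans le_refl)
    also have "\<dots> \<le> card (Zs n (Suc L)) + card (Zs (Suc n) L) + card (Zs (Suc n) L)"
      by (intro add_mono card_image_le Zs_finite)
    also have "\<dots> \<le> 3 ^ (n + Suc L) + 3 ^ (Suc n + L) + 3 ^ (Suc n + L)"
      using IH[of "Suc L"] Suc.IH by (intro add_mono) auto
    also have "\<dots> = 3 ^ (Suc n + Suc L)" by simp
    finally show ?case .
  qed
qed

definition hgrid :: "nat \<Rightarrow> real" where "hgrid n = 1 / (4 * sqrt (real n))"

definition net :: "nat \<Rightarrow> real vec set" where
  "net n = {y \<in> (\<lambda>zs. vec n (\<lambda>i. of_int (zs ! i) * hgrid n)) ` Zs n (5 * n). vnorm y \<le> 5/4}"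

lemma net_card: "card (net n) \<le> 3 ^ (6 * n)"
proof -
  have "card (net n) \<le> card ((\<lambda>zs. vec n (\<lambda>i. of_int (zs ! i) * hgrid n)) ` Zs n (5 * n))"
    unfolding net_def by (intro card_mono finite_imageI Zs_finite) auto
  also have "\<dots> \<le> card (Zs n (5 * n))" by (intro card_image_le Zs_finite)
  also have "\<dots> \<le> 3 ^ (n + 5 * n)" by (rule Zs_card)
  finally show ?thesis by simp
qed

lemma vnorm_sum: "x \<in> carrier_vec n \<Longrightarrow> (vnorm x)\<^sup>2 = (\<Sum>i<n. (x $ i)\<^sup>2)"
  by (simp only: vnorm_sq) (simp add: sp_sum power2_eq_square)

lemma vnorm_minus_comm: assumes "x \<in> carrier_vec n" "y \<in> carrier_vec n"
  shows "vnorm (x - y) = vnorm (y - x)"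
proof -
  have "(vnorm (x - y))\<^sup>2 = (vnorm (y - x))\<^sup>2"
    using assms by (simp add: vnorm_sum[of _ n] power2_commute)
  thus ?thesis using vnorm_nonneg by (metis power2_eq_iff_nonneg)
qed

lemma net_is_net: assumes n: "n \<ge> 1" shows "is_net n (net n)"
  unfolding is_net_def
proof (intro conjI ballI impI)
  show "finite (net n)" unfolding net_def by (rule finite_subset[OF _ finite_imageI[OF Zs_finite]]) auto
  show "net n \<subseteq> carrier_vec n" unfolding net_def by auto
  show "\<And>y. y \<in> net n \<Longrightarrow> vnorm y \<le> 5/4" unfolding net_def by auto
next
  fix x :: "real vec" assume x: "x \<in> carrier_vec n" and x1: "vnorm x \<le> 1"
  define h where "h = hgrid n"
  have sn: "sqrt (real n) > 0" using n by simp
  have h: "h > 0" unfolding h_def hgrid_def using sn by simp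
  define z where "z i = \<lfloor>x $ i / h\<rfloor>" for i
  define zs where "zs = map z [0..<n]"
  define y where "y = vec n (\<lambda>i. of_int (zs ! i) * h)"
  have y_eq: "y = vec n (\<lambda>i. of_int (z i) * h)" unfolding y_def zs_def by (intro eq_vecI) auto
  have yc: "y \<in> carrier_vec n" unfolding y_def by simp
  have coord: "\<bar>x $ i - of_int (z i) * h\<bar> \<le> h" for i
  proof -
    have a: "of_int (z i) \<le> x $ i / h" "x $ i / h < of_int (z i) + 1"
      unfolding z_def by linarith+
    have "of_int (z i) * h \<le> x $ i" using a(1) h by (simp add: pos_le_divide_eq)
    moreover have "x $ i < (of_int (z i) + 1) * h" using a(2) h by (simp add: pos_divide_less_eq)
    ultimately show ?thesis by (simp add: algebra_simps)
  qed
  have dist: "vnorm (x - y) \<le> 1/4"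
  proof -
    have "(vnorm (x - y))\<^sup>2 = (\<Sum>i<n. (x $ i - of_int (z i) * h)\<^sup>2)"
      using x yc by (subst vnorm_sum[of _ n]) (auto simp: y_eq)
    also have "\<dots> \<le> (\<Sum>i<n. h\<^sup>2)"
      using coord by (intro sum_mono) (metis abs_le_square_iff abs_of_pos h)
    also have "\<dots> = 1/16" using n sn unfolding h_def hgrid_def by (simp add: power2_eq_square)
    finally have "(vnorm (x - y))\<^sup>2 \<le> (1/4)\<^sup>2" by (simp add: power2_eq_square)
    thus ?thesis using vnorm_nonneg by (meson power2_le_imp_le zero_le_divide_iff zero_le_one zero_le_numeral)
  qed
  have ynorm: "vnorm y \<le> 5/4"
  proof -
    have "y = x + (y - x)" using x yc by (intro eq_vecI) auto
    hence "vnorm y \<le> vnorm x + vnorm (y - x)" using vnorm_add[OF x, of "y - x"] x yc by auto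
    also have "vnorm (y - x) = vnorm (x - y)" using vnorm_minus_comm x yc by metis
    finally show ?thesis using x1 dist by simp
  qed
  have l1: "(\<Sum>i<n. \<bar>x $ i\<bar>) \<le> sqrt (real n)"
  proof -
    have c1: "(\<Sum>i<n. \<bar>x $ i\<bar>)\<^sup>2 \<le> (\<Sum>i<n. \<bar>x $ i\<bar>\<^sup>2) * real (card {..<n})"
      by (rule sum_squared_le_sum_of_squares)
    have c2: "(\<Sum>i<n. \<bar>x $ i\<bar>\<^sup>2) = (vnorm x)\<^sup>2" using vnorm_sum[OF x] by simp
    have c3: "(vnorm x)\<^sup>2 \<le> 1" using x1 vnorm_nonneg[of x] by (simp add: power_le_one)
    have c4: "(vnorm x)\<^sup>2 * real n \<le> 1 * real n" using c3 by (intro mult_right_mono) auto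
    have "(\<Sum>i<n. \<bar>x $ i\<bar>)\<^sup>2 \<le> real n" using c1 c2 c4 by simp
    hence "(\<Sum>i<n. \<bar>x $ i\<bar>)\<^sup>2 \<le> (sqrt (real n))\<^sup>2" by simp
    thus ?thesis by (meson power2_le_imp_le real_sqrt_ge_zero of_nat_0_le_iff)
  qed
  have "real_of_int (sum_list (map abs zs)) = (\<Sum>i<n. real_of_int \<bar>z i\<bar>)"
    unfolding zs_def by (simp add: interv_sum_list_conv_sum_set_nat atLeast0LessThan)
  also have "\<dots> \<le> (\<Sum>i<n. \<bar>x $ i\<bar> / h + 1)"
  proof (rule sum_mono)
    fix i
    have "of_int (z i) \<le> x $ i / h" "x $ i / h < of_int (z i) + 1" unfolding z_def by linarith+
    moreover have "\<bar>x $ i / h\<bar> = \<bar>x $ i\<bar> / h" using h by simp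
    ultimately show "real_of_int \<bar>z i\<bar> \<le> \<bar>x $ i\<bar> / h + 1" by linarith
  qed
  also have "\<dots> = (\<Sum>i<n. \<bar>x $ i\<bar>) / h + n" by (simp add: sum.distrib sum_divide_distrib)
  also have "\<dots> \<le> sqrt (real n) / h + n" using l1 h by (simp add: divide_right_mono)
  also have "sqrt (real n) / h = 4 * n" unfolding h_def hgrid_def using sn
    by (simp add: field_simps)
  finally have "real_of_int (sum_list (map abs zs)) \<le> real (5 * n)" by simp
  hence "sum_list (map abs zs) \<le> int (5 * n)" by linarith
  hence zsZ: "zs \<in> Zs n (5 * n)" unfolding Zs_def zs_def by simp
  have "y \<in> net n" unfolding net_def using zsZ ynorm unfolding y_def h_def by blast
  thus "\<exists>y\<in>net n. vnorm (x - y) \<le> 1/4" using dist by blast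
qed


lemma disc_le: fixes a b c :: real
  assumes H: "\<And>t. a + 2 * b * t + c * t\<^sup>2 \<ge> 0" and c: "c \<ge> 0"
  shows "b\<^sup>2 \<le> a * c"
proof (cases "c = 0")
  case True
  have "b = 0"
  proof (rule ccontr)
    assume b: "b \<noteq> 0"
    have "a + 2 * b * (- (\<bar>a\<bar> + 1) / (2 * b)) + c * (- (\<bar>a\<bar> + 1) / (2 * b))\<^sup>2 \<ge> 0" by (rule H)
    moreover have "2 * b * (- (\<bar>a\<bar> + 1) / (2 * b)) = - (\<bar>a\<bar> + 1)" using b by (simp add: field_simps)
    ultimately have "a - (\<bar>a\<bar> + 1) \<ge> 0" using True by simp
    thus False by linarith
  qed
  thus ?thesis using True by simp
next
  case False
  hence cp: "c > 0" using c by simp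
  have "a + 2 * b * (- b / c) + c * (- b / c)\<^sup>2 \<ge> 0" by (rule H)
  hence "a - b\<^sup>2 / c \<ge> 0" using cp by (simp add: power2_eq_square field_simps)
  thus ?thesis using cp by (simp add: field_simps)
qed

definition symm :: "real mat \<Rightarrow> bool" where "symm S \<longleftrightarrow> transpose_mat S = S"

lemma symm_swap: assumes S: "S \<in> carrier_mat n n" "symm S" and x: "x \<in> carrier_vec n" and y: "y \<in> carrier_vec n"
  shows "x \<bullet> (S *\<^sub>v y) = y \<bullet> (S *\<^sub>v x)"
proof -
  have "(transpose_mat S *\<^sub>v x) \<bullet> y = x \<bullet> (S *\<^sub>v y)" by (rule transpose_vec_mult_scalar[OF S(1) y x])
  hence "(S *\<^sub>v x) \<bullet> y = x \<bullet> (S *\<^sub>v y)" using S(2) unfolding symm_def by simp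
  moreover have "(S *\<^sub>v x) \<bullet> y = y \<bullet> (S *\<^sub>v x)" using S x y by (intro comm_scalar_prod[of _ n]) auto
  ultimately show ?thesis by simp
qed

lemma quad_expand: assumes S: "S \<in> carrier_mat n n" "symm S" and x: "x \<in> carrier_vec n" and y: "y \<in> carrier_vec n"
  shows "(y + t \<cdot>\<^sub>v x) \<bullet> (S *\<^sub>v (y + t \<cdot>\<^sub>v x)) = y \<bullet> (S *\<^sub>v y) + 2 * t * (y \<bullet> (S *\<^sub>v x)) + t\<^sup>2 * (x \<bullet> (S *\<^sub>v x))"
proof -
  have Sx: "S *\<^sub>v x \<in> carrier_vec n" and Sy: "S *\<^sub>v y \<in> carrier_vec n" using S x y by auto
  have "S *\<^sub>v (y + t \<cdot>\<^sub>v x) = S *\<^sub>v y + t \<cdot>\<^sub>v (S *\<^sub>v x)"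
    using S x y by (simp add: mult_add_distrib_mat_vec mult_mat_vec)
  hence "(y + t \<cdot>\<^sub>v x) \<bullet> (S *\<^sub>v (y + t \<cdot>\<^sub>v x)) =
     y \<bullet> (S *\<^sub>v y) + t * (y \<bullet> (S *\<^sub>v x)) + t * (x \<bullet> (S *\<^sub>v y)) + t * (t * (x \<bullet> (S *\<^sub>v x)))"
    using x y Sx Sy
    by (simp add: add_scalar_prod_distrib[of _ n] scalar_prod_add_distrib[of _ n] algebra_simps)
  thus ?thesis using symm_swap[OF S x y] by (simp add: power2_eq_square algebra_simps)
qed

lemma nsd_cs: assumes S: "S \<in> carrier_mat n n" "symm S"
  and nsd: "\<And>z. z \<in> carrier_vec n \<Longrightarrow> z \<bullet> (S *\<^sub>v z) \<le> 0"
  and x: "x \<in> carrier_vec n" and y: "y \<in> carrier_vec n"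
  shows "(y \<bullet> (S *\<^sub>v x))\<^sup>2 \<le> (- (y \<bullet> (S *\<^sub>v y))) * (- (x \<bullet> (S *\<^sub>v x)))"
proof -
  have "(- (y \<bullet> (S *\<^sub>v x)))\<^sup>2 \<le> (- (y \<bullet> (S *\<^sub>v y))) * (- (x \<bullet> (S *\<^sub>v x)))"
  proof (rule disc_le)
    fix t
    have "(y + t \<cdot>\<^sub>v x) \<bullet> (S *\<^sub>v (y + t \<cdot>\<^sub>v x)) \<le> 0" using x y by (intro nsd) auto
    thus "- (y \<bullet> (S *\<^sub>v y)) + 2 * - (y \<bullet> (S *\<^sub>v x)) * t + - (x \<bullet> (S *\<^sub>v x)) * t\<^sup>2 \<ge> 0"
      using quad_expand[OF S x y, of t] by (simp add: algebra_simps)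
  qed (use nsd[OF x] in auto)
  thus ?thesis by simp
qed

lemma inv_ex: assumes A: "(A::real mat) \<in> carrier_mat n n" and d: "det A \<noteq> 0"
  shows "\<exists>C \<in> carrier_mat n n. C * A = 1\<^sub>m n"
  using det_non_zero_imp_unit[OF A d, of undefined] unfolding Units_def ring_mat_def by auto

lemma gram_quad: assumes Th: "Ths \<in> carrier_mat T d" and z: "z \<in> carrier_vec d"
  shows "z \<bullet> ((transpose_mat Ths * Ths) *\<^sub>v z) = (vnorm (Ths *\<^sub>v z))\<^sup>2"
proof -
  have w: "Ths *\<^sub>v z \<in> carrier_vec T" using Th z by auto
  have "(transpose_mat Ths * Ths) *\<^sub>v z = transpose_mat Ths *\<^sub>v (Ths *\<^sub>v z)"
    using Th z by (intro assoc_mult_mat_vec) auto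
  moreover have "z \<bullet> (transpose_mat Ths *\<^sub>v (Ths *\<^sub>v z)) = (transpose_mat Ths *\<^sub>v (Ths *\<^sub>v z)) \<bullet> z"
    using Th z by (intro comm_scalar_prod[of _ d]) auto
  moreover have "(transpose_mat Ths *\<^sub>v (Ths *\<^sub>v z)) \<bullet> z = (Ths *\<^sub>v z) \<bullet> (Ths *\<^sub>v z)"
    by (rule transpose_vec_mult_scalar[OF Th z w])
  ultimately show ?thesis by (simp add: vnorm_sq)
qed

lemma sum_unit_aux: "i < n \<Longrightarrow> (\<Sum>ia = 0..<n. c * ((z::real vec) $ ia * (if i = ia then 1 else 0))) = c * z $ i"
proof -
  assume i: "i < n"
  have "(\<Sum>ia = 0..<n. c * (z $ ia * (if i = ia then 1 else 0))) = (\<Sum>ia = 0..<n. if i = ia then c * z $ ia else 0)"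
    by (rule sum.cong) auto
  thus ?thesis using i by (simp add: sum.delta sum.delta')
qed

lemma smult_mv: "B \<in> carrier_mat n m \<Longrightarrow> v \<in> carrier_vec m \<Longrightarrow> (k \<cdot>\<^sub>m B) *\<^sub>v v = k \<cdot>\<^sub>v (B *\<^sub>v (v::real vec))"
  by (intro eq_vecI) (auto simp: mult_mat_vec_def scalar_prod_def sum_distrib_left ac_simps)

lemma charN: assumes A: "A \<in> carrier_mat n n" and z: "z \<in> carrier_vec n"
  shows "char_matrix A mu *\<^sub>v z = A *\<^sub>v z - mu \<cdot>\<^sub>v (z::real vec)"
proof -
  have "char_matrix A mu *\<^sub>v z = A *\<^sub>v z + ((- mu) \<cdot>\<^sub>m 1\<^sub>m n) *\<^sub>v z"
    unfolding char_matrix_def using A z by (simp add: add_mult_distrib_mat_vec[of _ n n])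
  also have "((- mu) \<cdot>\<^sub>m 1\<^sub>m n) *\<^sub>v z = (- mu) \<cdot>\<^sub>v z" using z by (simp add: smult_mv[of _ n n])
  finally show ?thesis using A z by (intro eq_vecI) auto
qed

lemma charN_symm: assumes A: "A \<in> carrier_mat n n" "symm A" shows "symm (char_matrix A mu)"
proof -
  have e: "A $$ (j, i) = A $$ (i, j)" if "i < n" "j < n" for i j
  proof -
    have "transpose_mat A $$ (i, j) = A $$ (j, i)" using A(1) that by simp
    thus ?thesis using A(2) unfolding symm_def by simp
  qed
  show ?thesis unfolding symm_def char_matrix_def
    by (rule eq_matI) (use A(1) e in auto)
qed

lemma sigma_pos: assumes Th: "Ths \<in> carrier_mat T d" and rk: "mat_rank T Ths > 0"
  shows "sigma_min Ths > 0"
proof -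
  define A where "A = transpose_mat Ths * Ths"
  have A: "A \<in> carrier_mat d d" unfolding A_def using Th by auto
  have Asym: "symm A" unfolding A_def symm_def using Th
    by (simp add: transpose_mult[of _ d T _ d])
  define q where "q z = z \<bullet> (A *\<^sub>v z)" for z
  have qn: "q z = (vnorm (Ths *\<^sub>v z))\<^sup>2" if "z \<in> carrier_vec d" for z
    unfolding q_def A_def by (rule gram_quad[OF Th that])
  have "Ths \<noteq> 0\<^sub>m T d"
  proof
    assume "Ths = 0\<^sub>m T d"
    hence "mat_rank T Ths = 0" unfolding mat_rank_def using vec_space.rank_0I by metis
    thus False using rk by simp
  qed
  moreover have "Ths = 0\<^sub>m T d" if "\<forall>i<T. \<forall>j<d. Ths $$ (i,j) = 0"
    using Th that by (intro eq_matI) auto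
  ultimately obtain i j where ij: "i < T" "j < d" "Ths $$ (i,j) \<noteq> 0"
    by blast
  define e where "e = (unit_vec d j :: real vec)"
  have ec: "e \<in> carrier_vec d" unfolding e_def by simp
  have en: "vnorm e = 1" unfolding vnorm_def e_def using ij(2) by (simp add: scalar_prod_left_unit)
  have "(Ths *\<^sub>v e) $ i = Ths $$ (i,j)" using Th ij unfolding e_def
    by (simp add: comm_scalar_prod[of _ d] scalar_prod_left_unit)
  hence "Ths *\<^sub>v e \<noteq> 0\<^sub>v T" using ij by auto
  hence "vnorm (Ths *\<^sub>v e) \<noteq> 0" using vnorm_zero_iff[of "Ths *\<^sub>v e" T] Th ec by auto
  hence qe: "q e > 0" using qn[OF ec] vnorm_nonneg by simp
  define Q where "Q = {q z | z. z \<in> carrier_vec d \<and> vnorm z \<le> 1}"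
  have Qbdd: "bdd_above Q"
  proof (rule bdd_aboveI[of _ "(frob Ths)\<^sup>2"])
    fix y assume "y \<in> Q"
    then obtain z where z: "z \<in> carrier_vec d" "vnorm z \<le> 1" "y = q z" unfolding Q_def by auto
    have "vnorm (Ths *\<^sub>v z) \<le> frob Ths * vnorm z" by (rule vnorm_mult_le[OF Th z(1)])
    also have "\<dots> \<le> frob Ths" using z(2) frob_nonneg[of Ths] vnorm_nonneg[of z] by (simp add: mult_left_le)
    finally show "y \<le> (frob Ths)\<^sup>2" using z qn vnorm_nonneg by (simp add: power_mono)
  qed
  have eQ: "q e \<in> Q" unfolding Q_def using ec en by auto
  define mu where "mu = Sup Q"
  have Qle: "x \<le> mu" if "x \<in> Q" for x unfolding mu_def by (rule cSup_upper[OF that Qbdd])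
  have mupos: "mu > 0" using Qle[OF eQ] qe by simp
  have hom: "q z \<le> mu * (vnorm z)\<^sup>2" if z: "z \<in> carrier_vec d" for z
  proof (cases "vnorm z = 0")
    case True
    hence "z = 0\<^sub>v d" using vnorm_zero_iff[OF z] by simp
    thus ?thesis using A unfolding q_def by (simp add: vnorm_def)
  next
    case False
    hence p: "vnorm z > 0" using vnorm_nonneg[of z] by simp
    let ?z = "(1 / vnorm z) \<cdot>\<^sub>v z"
    have "q ?z \<in> Q" unfolding Q_def using z p by (auto simp: vnorm_smult)
    hence "q ?z \<le> mu" by (rule Qle)
    moreover have "q ?z = q z / (vnorm z)\<^sup>2"
      unfolding q_def using A z by (simp add: mult_mat_vec power2_eq_square)
    ultimately show ?thesis using p by (simp add: divide_le_eq mult.commute)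
  qed
  have qnn: "q z \<ge> 0" if "z \<in> carrier_vec d" for z using qn[OF that] by simp
  define N where "N = char_matrix A mu"
  have N: "N \<in> carrier_mat d d" unfolding N_def using A by simp
  have Nsym: "symm N" unfolding N_def by (rule charN_symm[OF A Asym])
  have Nz: "z \<bullet> (N *\<^sub>v z) = q z - mu * (vnorm z)\<^sup>2" if z: "z \<in> carrier_vec d" for z
    unfolding N_def q_def using charN[OF A z, of mu] A z
    by (simp add: scalar_prod_minus_distrib[of _ d] vnorm_sq)
  have nsd: "z \<bullet> (N *\<^sub>v z) \<le> 0" if "z \<in> carrier_vec d" for z
    using Nz[OF that] hom[OF that] by simp
  have detN: "det N = 0"
  proof (rule ccontr)
    assume "det N \<noteq> 0"
    then obtain C where C: "C \<in> carrier_mat d d" "C * N = 1\<^sub>m d" using inv_ex[OF N] by blast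
    define F where "F = frob C"
    have F0: "F \<ge> 0" unfolding F_def by (rule frob_nonneg)
    have inv: "vnorm x \<le> F * vnorm (N *\<^sub>v x)" if x: "x \<in> carrier_vec d" for x
    proof -
      have "C *\<^sub>v (N *\<^sub>v x) = (C * N) *\<^sub>v x" using C(1) N x by (intro assoc_mult_mat_vec[symmetric])
      also have "\<dots> = x" using x by (subst C(2)) simp
      finally have "x = C *\<^sub>v (N *\<^sub>v x)" by simp
      hence "vnorm x = vnorm (C *\<^sub>v (N *\<^sub>v x))" by simp
      also have "\<dots> \<le> F * vnorm (N *\<^sub>v x)" unfolding F_def using N x by (intro vnorm_mult_le[OF C(1)]) auto
      finally show ?thesis .
    qed
    define eta where "eta = min (mu / 2) (1 / (2 * F\<^sup>2 * mu + 1))"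
    have "0 \<le> 2 * F\<^sup>2 * mu" using mupos by simp
    hence "0 < 2 * F\<^sup>2 * mu + 1" by linarith
    hence eta0: "eta > 0" unfolding eta_def using mupos by simp
    have Qne: "Q \<noteq> {}" using eQ by blast
    have "mu - eta < Sup Q" using eta0 unfolding mu_def by simp
    then obtain y where "y \<in> Q" "mu - eta < y" using less_cSupD[OF Qne] by blast
    then obtain x where x: "x \<in> carrier_vec d" "vnorm x \<le> 1" and qx: "q x > mu - eta" unfolding Q_def by auto
    define c where "c = - (x \<bullet> (N *\<^sub>v x))"
    have xx1: "(vnorm x)\<^sup>2 \<le> 1" using x(2) vnorm_nonneg[of x] by (simp add: power_le_one)
    have c_def2: "c = mu * (vnorm x)\<^sup>2 - q x" unfolding c_def using Nz[OF x(1)] by simp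
    have c0: "c \<ge> 0" unfolding c_def using nsd[OF x(1)] by simp
    have ceta: "c \<le> eta"
    proof -
      have "mu * (vnorm x)\<^sup>2 \<le> mu" using xx1 mupos by (simp add: mult_left_le)
      thus ?thesis using c_def2 qx by simp
    qed
    define y where "y = N *\<^sub>v x"
    have yc: "y \<in> carrier_vec d" unfolding y_def using N x by auto
    have yy: "y \<bullet> (N *\<^sub>v x) = (vnorm y)\<^sup>2" unfolding y_def by (simp add: vnorm_sq)
    have yNy: "- (y \<bullet> (N *\<^sub>v y)) \<le> mu * (vnorm y)\<^sup>2" using Nz[OF yc] qnn[OF yc] by simp
    have cs: "((vnorm y)\<^sup>2)\<^sup>2 \<le> (- (y \<bullet> (N *\<^sub>v y))) * c"
      using nsd_cs[OF N Nsym nsd x(1) yc] yy unfolding c_def by simp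
    also have "\<dots> \<le> mu * (vnorm y)\<^sup>2 * c" using yNy c0 by (intro mult_right_mono) auto
    finally have cs2: "((vnorm y)\<^sup>2)\<^sup>2 \<le> mu * (vnorm y)\<^sup>2 * c" .
    have ybound: "(vnorm y)\<^sup>2 \<le> mu * c"
    proof (cases "vnorm y = 0")
      case True thus ?thesis using mupos c0 by simp
    next
      case False
      hence p: "(vnorm y)\<^sup>2 > 0" by simp
      have "(vnorm y)\<^sup>2 * (vnorm y)\<^sup>2 \<le> (mu * c) * (vnorm y)\<^sup>2"
        using cs2 by (simp only: power2_eq_square[of "(vnorm y)\<^sup>2"]) (simp add: ac_simps)
      thus ?thesis using p by (meson mult_right_le_imp_le)
    qed
    have "(vnorm x)\<^sup>2 \<le> (F * vnorm y)\<^sup>2" using inv[OF x(1)] vnorm_nonneg[of x] unfolding y_def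
      by (simp add: power_mono)
    also have "\<dots> = F\<^sup>2 * (vnorm y)\<^sup>2" by (simp add: power_mult_distrib)
    also have "\<dots> \<le> F\<^sup>2 * (mu * eta)"
      using ybound ceta mupos by (intro mult_left_mono) (auto intro: order_trans mult_left_mono)
    also have "\<dots> \<le> 1/2"
    proof -
      have "eta \<le> 1 / (2 * F\<^sup>2 * mu + 1)" unfolding eta_def by simp
      hence "F\<^sup>2 * mu * eta \<le> F\<^sup>2 * mu * (1 / (2 * F\<^sup>2 * mu + 1))"
        using mupos by (intro mult_left_mono) auto
      also have "\<dots> \<le> 1/2"
      proof -
        have p: "0 \<le> F\<^sup>2 * mu" using mupos by simp
        hence "F\<^sup>2 * mu \<le> 1/2 * (2 * F\<^sup>2 * mu + 1)" by simp
        thus ?thesis using p by (simp add: divide_le_eq add_pos_nonneg mult.assoc)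
      qed
      finally show ?thesis by (simp add: mult.assoc)
    qed
    finally have x2: "(vnorm x)\<^sup>2 \<le> 1/2" .
    have "q x \<le> mu * (vnorm x)\<^sup>2" by (rule hom[OF x(1)])
    also have "\<dots> \<le> mu / 2" using x2 mupos by simp
    finally have "q x \<le> mu / 2" .
    moreover have "eta \<le> mu / 2" unfolding eta_def by simp
    ultimately show False using qx by simp
  qed
  have eig: "eigenvalue A mu" using detN eigenvalue_det[OF A] unfolding N_def by simp
  define S where "S = {s. singular_value Ths s \<and> s \<noteq> 0}"
  have sS: "sqrt mu \<in> S" unfolding S_def singular_value_def A_def[symmetric]
    using eig mupos by simp
  have cp: "char_poly A \<noteq> 0" using degree_monic_char_poly[OF A] by auto
  have "S \<subseteq> sqrt ` {e. poly (char_poly A) e = 0}"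
  proof
    fix s assume "s \<in> S"
    hence s: "s \<ge> 0" "eigenvalue A (s\<^sup>2)" unfolding S_def singular_value_def A_def by auto
    hence "poly (char_poly A) (s\<^sup>2) = 0" using eigenvalue_root_char_poly[OF A] by simp
    moreover have "s = sqrt (s\<^sup>2)" using s by simp
    ultimately show "s \<in> sqrt ` {e. poly (char_poly A) e = 0}" by blast
  qed
  hence finS: "finite S" using poly_roots_finite[OF cp] finite_subset by blast
  have "Min S \<in> S" using Min_in[OF finS] sS by blast
  thus ?thesis unfolding sigma_min_def S_def[symmetric] unfolding S_def singular_value_def by auto
qed


lemma comp_le_vnorm: assumes w: "w \<in> carrier_vec d" and i: "i < d"
  shows "\<bar>w $ i\<bar> \<le> vnorm w"
proof -
  have u: "unit_vec d i \<in> carrier_vec d" by simp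
  have "\<bar>unit_vec d i \<bullet> w\<bar> \<le> vnorm (unit_vec d i) * vnorm w" by (rule CS[OF u w])
  moreover have "vnorm (unit_vec d i :: real vec) = 1" unfolding vnorm_def using i by (simp add: scalar_prod_left_unit)
  ultimately show ?thesis using w i by (simp add: scalar_prod_left_unit)
qed

lemma supp_sample: assumes "\<omega> \<in> set_pmf (sample_space d T K D)" "t < T" "k < K"
  shows "\<omega> (t,k) \<in> set_pmf D"
  using assms unfolding sample_space_def by (auto simp: set_Pi_pmf PiE_dflt_def)

lemma hat_entry: "i < d \<Longrightarrow> t < T \<Longrightarrow> Theta0_hat d T K Ths \<omega> $$ (i,t) =
   (1 / real K) * (\<Sum>k<K. (\<omega> (t,k) $ i) * (row Ths t \<bullet> \<omega> (t,k)))"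
  unfolding Theta0_hat_def by simp

lemma hat_carrier: "Theta0_hat d T K Ths \<omega> \<in> carrier_mat d T" unfolding Theta0_hat_def by simp
lemma mean_carrier: "Theta0_mean d T K D Ths \<in> carrier_mat d T" unfolding Theta0_mean_def by simp

lemma bil_sum: assumes H: "H \<in> carrier_mat d T" and u: "u \<in> carrier_vec d" and v: "v \<in> carrier_vec T"
  shows "u \<bullet> (H *\<^sub>v v) = (\<Sum>i<d. \<Sum>t<T. u $ i * (H $$ (i,t) * v $ t))"
  using H u v by (simp add: sp_sum[of _ d] sp_sum[of _ T] sum_distrib_left ac_simps)

lemma bil_tail:
  fixes d T K :: nat and D :: "real vec pmf" and Ths :: "real mat" and u v :: "real vec" and s :: real
  assumes K: "K \<ge> 1" and Th: "Ths \<in> carrier_mat T d"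
  and hy: "\<forall>t<T. \<forall>w\<in>set_pmf D. 0 \<le> row Ths t \<bullet> w \<and> row Ths t \<bullet> w \<le> 1"
  and hD: "\<forall>w\<in>set_pmf D. w \<in> carrier_vec d \<and> vnorm w \<le> 1"
  and u: "u \<in> carrier_vec d" "vnorm u \<le> 5/4" and v: "v \<in> carrier_vec T" "vnorm v \<le> 5/4"
  and s: "s > 0"
  shows "measure_pmf.prob (sample_space d T K D)
     {\<omega>. u \<bullet> ((Theta0_hat d T K Ths \<omega> - Theta0_mean d T K D Ths) *\<^sub>v v) \<ge> s}
     \<le> exp (- (real K * s\<^sup>2 / 5))"
proof -
  let ?\<Omega> = "sample_space d T K D"
  define I where "I = {..<T} \<times> {..<K}"
  define y where "y t w = row Ths t \<bullet> w" for t w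
  define H where "H \<omega> i t = Theta0_hat d T K Ths \<omega> $$ (i,t)" for \<omega> i t
  define g where "g \<omega> = (\<Sum>i<d. \<Sum>t<T. u $ i * (H \<omega> i t * v $ t))" for \<omega>
  define X where "X (p::nat \<times> nat) (\<omega>::nat \<times> nat \<Rightarrow> real vec) = v $ fst p / real K * ((u \<bullet> \<omega> p) * y (fst p) (\<omega> p))" for p \<omega>
  define c where "c p = \<bar>v $ fst p\<bar> * vnorm u / real K" for p :: "nat \<times> nat"
  have finI: "finite I" unfolding I_def by simp
  have Kp: "real K > 0" using K by simp
  have supp: "\<omega> (t,k) \<in> carrier_vec d" "vnorm (\<omega> (t,k)) \<le> 1" "0 \<le> y t (\<omega> (t,k))" "y t (\<omega> (t,k)) \<le> 1"
    if "\<omega> \<in> set_pmf ?\<Omega>" "t < T" "k < K" for \<omega> t k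
    using supp_sample[OF that] hD hy that(2) unfolding y_def by auto
  have Hb: "\<bar>H \<omega> i t\<bar> \<le> 1" if w: "\<omega> \<in> set_pmf ?\<Omega>" and i: "i < d" and t: "t < T" for \<omega> i t
  proof -
    have "\<bar>\<Sum>k<K. (\<omega> (t,k) $ i) * y t (\<omega> (t,k))\<bar> \<le> (\<Sum>k<K. \<bar>(\<omega> (t,k) $ i) * y t (\<omega> (t,k))\<bar>)"
      by (rule sum_abs)
    also have "\<dots> \<le> (\<Sum>k<K. 1)"
    proof (rule sum_mono)
      fix k assume k: "k \<in> {..<K}"
      have k': "k < K" using k by simp
      have "\<bar>\<omega> (t,k) $ i\<bar> \<le> 1" using comp_le_vnorm[OF supp(1)[OF w t k'] i] supp(2)[OF w t k'] by linarith
      moreover have "\<bar>y t (\<omega> (t,k))\<bar> \<le> 1" using supp(3,4)[OF w t] k by auto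
      ultimately show "\<bar>(\<omega> (t,k) $ i) * y t (\<omega> (t,k))\<bar> \<le> 1"
        by (simp add: abs_mult mult_le_one)
    qed
    finally have "\<bar>\<Sum>k<K. (\<omega> (t,k) $ i) * y t (\<omega> (t,k))\<bar> \<le> real K" by simp
    thus ?thesis unfolding H_def y_def using hat_entry[OF i t] Kp by (simp add: abs_mult divide_le_eq)
  qed
  have Hint: "integrable (measure_pmf ?\<Omega>) (\<lambda>\<omega>. H \<omega> i t)" if "i < d" "t < T" for i t
    by (rule measure_pmf.integrable_const_bound[where B=1]) (use Hb that in \<open>auto simp: AE_measure_pmf_iff\<close>)
  have Xb: "\<bar>X p \<omega>\<bar> \<le> c p" if w: "\<omega> \<in> set_pmf ?\<Omega>" and p: "p \<in> I" for p \<omega>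
  proof -
    obtain t k where tk: "p = (t,k)" "t < T" "k < K" using p unfolding I_def by auto
    have "\<bar>u \<bullet> \<omega> (t,k)\<bar> \<le> vnorm u * vnorm (\<omega> (t,k))" by (rule CS[OF u(1) supp(1)[OF w tk(2,3)]])
    also have "\<dots> \<le> vnorm u" using supp(2)[OF w tk(2,3)] vnorm_nonneg[of u] by (simp add: mult_left_le)
    finally have a: "\<bar>u \<bullet> \<omega> (t,k)\<bar> \<le> vnorm u" .
    have b: "\<bar>y t (\<omega> (t,k))\<bar> \<le> 1" using supp(3,4)[OF w tk(2,3)] by auto
    have "\<bar>(u \<bullet> \<omega> (t,k)) * y t (\<omega> (t,k))\<bar> \<le> vnorm u"
      using a b vnorm_nonneg[of u] by (simp add: abs_mult mult_le_one) (metis abs_ge_zero mult_mono mult.right_neutral)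
    hence "\<bar>v $ t\<bar> / real K * \<bar>(u \<bullet> \<omega> (t,k)) * y t (\<omega> (t,k))\<bar> \<le> \<bar>v $ t\<bar> / real K * vnorm u"
      by (intro mult_left_mono) auto
    thus ?thesis unfolding X_def c_def tk(1) by (simp add: abs_mult)
  qed
  have Xint: "integrable (measure_pmf ?\<Omega>) (X p)" if "p \<in> I" for p
    by (rule measure_pmf.integrable_const_bound[where B="c p"]) (use Xb that in \<open>auto simp: AE_measure_pmf_iff\<close>)
  have gX: "g \<omega> = (\<Sum>p\<in>I. X p \<omega>)" if w: "\<omega> \<in> set_pmf ?\<Omega>" for \<omega>
  proof -
    have "g \<omega> = (\<Sum>i<d. \<Sum>t<T. \<Sum>k<K. u $ i * (\<omega> (t,k) $ i) * (y t (\<omega> (t,k)) * v $ t / real K))"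
      unfolding g_def H_def y_def
      by (intro sum.cong refl) (simp add: hat_entry sum_distrib_left sum_distrib_right ac_simps)
    also have "\<dots> = (\<Sum>t<T. \<Sum>k<K. \<Sum>i<d. u $ i * (\<omega> (t,k) $ i) * (y t (\<omega> (t,k)) * v $ t / real K))"
      by (subst sum.swap) (simp add: sum.swap[of _ "{..<K}" "{..<d}"])
    also have "\<dots> = (\<Sum>t<T. \<Sum>k<K. X (t,k) \<omega>)"
    proof (intro sum.cong refl)
      fix t k assume t: "t \<in> {..<T}" and k: "k \<in> {..<K}"
      have "u \<bullet> \<omega> (t,k) = (\<Sum>i<d. u $ i * \<omega> (t,k) $ i)" using sp_sum[OF supp(1)[OF w]] t k by auto
      hence "X (t,k) \<omega> = (\<Sum>i<d. u $ i * \<omega> (t,k) $ i) * (y t (\<omega> (t,k)) * v $ t / real K)"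
        unfolding X_def by simp
      also have "\<dots> = (\<Sum>i<d. u $ i * \<omega> (t,k) $ i * (y t (\<omega> (t,k)) * v $ t / real K))"
        by (rule sum_distrib_right)
      finally show "(\<Sum>i<d. u $ i * (\<omega> (t,k) $ i) * (y t (\<omega> (t,k)) * v $ t / real K)) = X (t,k) \<omega>"
        by simp
    qed
    also have "\<dots> = (\<Sum>p\<in>I. X p \<omega>)" unfolding I_def by (simp add: sum.cartesian_product)
    finally show ?thesis .
  qed
  have mean_eq: "u \<bullet> (Theta0_mean d T K D Ths *\<^sub>v v) = measure_pmf.expectation ?\<Omega> g"
  proof -
    have "u \<bullet> (Theta0_mean d T K D Ths *\<^sub>v v) =
        (\<Sum>i<d. \<Sum>t<T. u $ i * (measure_pmf.expectation ?\<Omega> (\<lambda>\<omega>. H \<omega> i t) * v $ t))"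
      by (subst bil_sum[OF mean_carrier u(1) v(1)]) (simp add: Theta0_mean_def H_def)
    also have "\<dots> = measure_pmf.expectation ?\<Omega> g"
    proof -
      have i1: "integrable (measure_pmf ?\<Omega>) (\<lambda>\<omega>. u $ i * (H \<omega> i t * v $ t))" if "i < d" "t < T" for i t
        using Hint[OF that] by (intro integrable_mult_right integrable_mult_left)
      have e1: "measure_pmf.expectation ?\<Omega> (\<lambda>\<omega>. u $ i * (H \<omega> i t * v $ t)) =
          u $ i * (measure_pmf.expectation ?\<Omega> (\<lambda>\<omega>. H \<omega> i t) * v $ t)" for i t
        by simp
      have i2: "integrable (measure_pmf ?\<Omega>) (\<lambda>\<omega>. \<Sum>t<T. u $ i * (H \<omega> i t * v $ t))" if "i < d" for i
        using i1 that by (intro Bochner_Integration.integrable_sum) auto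
      have e2: "measure_pmf.expectation ?\<Omega> (\<lambda>\<omega>. \<Sum>t<T. u $ i * (H \<omega> i t * v $ t)) =
          (\<Sum>t<T. u $ i * (measure_pmf.expectation ?\<Omega> (\<lambda>\<omega>. H \<omega> i t) * v $ t))" if "i < d" for i
        using i1 that by (subst Bochner_Integration.integral_sum) (auto simp: e1)
      have "measure_pmf.expectation ?\<Omega> g = (\<Sum>i<d. measure_pmf.expectation ?\<Omega> (\<lambda>\<omega>. \<Sum>t<T. u $ i * (H \<omega> i t * v $ t)))"
        unfolding g_def using i2 by (subst Bochner_Integration.integral_sum) auto
      also have "\<dots> = (\<Sum>i<d. \<Sum>t<T. u $ i * (measure_pmf.expectation ?\<Omega> (\<lambda>\<omega>. H \<omega> i t) * v $ t))"
        using e2 by (intro sum.cong refl) auto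
      finally show ?thesis by simp
    qed
    finally show ?thesis .
  qed
  have EgX: "measure_pmf.expectation ?\<Omega> g = (\<Sum>p\<in>I. measure_pmf.expectation ?\<Omega> (X p))"
  proof -
    have "measure_pmf.expectation ?\<Omega> g = measure_pmf.expectation ?\<Omega> (\<lambda>\<omega>. \<Sum>p\<in>I. X p \<omega>)"
      by (rule integral_cong_AE) (use gX in \<open>auto simp: AE_measure_pmf_iff\<close>)
    also have "\<dots> = (\<Sum>p\<in>I. measure_pmf.expectation ?\<Omega> (X p))"
      by (rule Bochner_Integration.integral_sum) (use Xint in auto)
    finally show ?thesis .
  qed
  have Meq: "u \<bullet> ((Theta0_hat d T K Ths \<omega> - Theta0_mean d T K D Ths) *\<^sub>v v) =
       g \<omega> - measure_pmf.expectation ?\<Omega> g" for \<omega>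
  proof -
    have "(Theta0_hat d T K Ths \<omega> - Theta0_mean d T K D Ths) *\<^sub>v v =
        Theta0_hat d T K Ths \<omega> *\<^sub>v v - Theta0_mean d T K D Ths *\<^sub>v v"
      by (rule minus_mult_distrib_mat_vec[OF hat_carrier mean_carrier v(1)])
    hence "u \<bullet> ((Theta0_hat d T K Ths \<omega> - Theta0_mean d T K D Ths) *\<^sub>v v) =
        u \<bullet> (Theta0_hat d T K Ths \<omega> *\<^sub>v v) - u \<bullet> (Theta0_mean d T K D Ths *\<^sub>v v)"
      using scalar_prod_minus_distrib[OF u(1) mult_mat_vec_carrier[OF hat_carrier v(1)] mult_mat_vec_carrier[OF mean_carrier v(1)]]
      by simp
    also have "u \<bullet> (Theta0_hat d T K Ths \<omega> *\<^sub>v v) = g \<omega>"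
      unfolding g_def H_def by (rule bil_sum[OF hat_carrier u(1) v(1)])
    finally show ?thesis using mean_eq by simp
  qed
  let ?E = "{\<omega>. u \<bullet> ((Theta0_hat d T K Ths \<omega> - Theta0_mean d T K D Ths) *\<^sub>v v) \<ge> s}"
  show ?thesis
  proof (cases "vnorm u * vnorm v = 0")
    case True
    hence "u = 0\<^sub>v d \<or> v = 0\<^sub>v T" using vnorm_zero_iff[OF u(1)] vnorm_zero_iff[OF v(1)] by auto
    hence g0: "g = (\<lambda>_. 0)" unfolding g_def by (auto intro!: ext sum.neutral)
    have "?E = {}" using Meq s unfolding g0 by auto
    thus ?thesis by simp
  next
    case False
    hence pos: "vnorm u * vnorm v > 0" using vnorm_nonneg[of u] vnorm_nonneg[of v] by (simp add: less_le)
    define mu where "mu = (\<Sum>p\<in>I. measure_pmf.expectation ?\<Omega> (X p))"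
    interpret Hf: Hoeffding_ineq "measure_pmf ?\<Omega>" I X "\<lambda>p. - c p" c mu
    proof unfold_locales
      show "finite I" by (rule finI)
      show "prob_space.indep_vars (measure_pmf ?\<Omega>) (\<lambda>_. borel) X I"
      proof -
        define Yf where "Yf p w = v $ fst p / real K * ((u \<bullet> w) * y (fst p) w)" for p :: "nat \<times> nat" and w
        have "prob_space.indep_vars (measure_pmf (Pi_pmf I (0\<^sub>v d) (\<lambda>_. D))) (\<lambda>_. borel)
           (\<lambda>p x. Yf p ((\<lambda>p f. f p) p x)) I"
          by (rule prob_space.indep_vars_compose2[OF measure_pmf.prob_space_axioms indep_vars_Pi_pmf[OF finI]]) auto
        hence "prob_space.indep_vars (measure_pmf ?\<Omega>) (\<lambda>_. borel) (\<lambda>p x. Yf p (x p)) I"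
          unfolding sample_space_def I_def by simp
        thus ?thesis unfolding X_def Yf_def by simp
      qed
      show "AE x in measure_pmf ?\<Omega>. X i x \<in> {- c i..c i}" if "i \<in> I" for i
        using Xb[OF _ that] by (auto simp: AE_measure_pmf_iff abs_le_iff) (smt (verit) Xb that)
      show "mu \<equiv> \<Sum>i\<in>I. measure_pmf.expectation ?\<Omega> (X i)" unfolding mu_def by simp
    qed
    have sumsq: "(\<Sum>p\<in>I. (c p - - c p)\<^sup>2) = 4 * (vnorm u)\<^sup>2 * (vnorm v)\<^sup>2 / real K"
    proof -
      have "(\<Sum>p\<in>I. (c p - - c p)\<^sup>2) = (\<Sum>t<T. \<Sum>k<K. (c (t,k) - - c (t,k))\<^sup>2)"
        unfolding I_def sum.cartesian_product by (simp add: split_beta)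
      also have "\<dots> = (\<Sum>t<T. \<Sum>k<K. 4 * (v $ t)\<^sup>2 * (vnorm u)\<^sup>2 / (real K)\<^sup>2)"
        unfolding c_def by (intro sum.cong refl) (simp add: power2_eq_square field_simps)
      also have "\<dots> = (\<Sum>t<T. 4 * (v $ t)\<^sup>2 * (vnorm u)\<^sup>2 / real K)"
        using Kp by (intro sum.cong refl) (simp add: power2_eq_square)
      also have "\<dots> = 4 * (vnorm u)\<^sup>2 * (\<Sum>t<T. (v $ t)\<^sup>2) / real K"
        by (simp add: sum_distrib_left sum_divide_distrib ac_simps)
      also have "(\<Sum>t<T. (v $ t)\<^sup>2) = (vnorm v)\<^sup>2" using vnorm_sum[OF v(1)] by simp
      finally show ?thesis .
    qed
    have ab: "(vnorm u)\<^sup>2 * (vnorm v)\<^sup>2 > 0" using pos False by simp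
    have sp: "(\<Sum>p\<in>I. (c p - - c p)\<^sup>2) > 0" unfolding sumsq using ab Kp by simp
    have hoeff: "measure_pmf.prob ?\<Omega> {x \<in> space (measure_pmf ?\<Omega>). (\<Sum>p\<in>I. X p x) \<ge> mu + s}
       \<le> exp (- 2 * s\<^sup>2 / (\<Sum>p\<in>I. (c p - - c p)\<^sup>2))"
      using Hf.Hoeffding_ineq_ge[OF less_imp_le[OF s] sp] unfolding mu_def by simp
    have sub: "?E \<inter> set_pmf ?\<Omega> \<subseteq> {x \<in> space (measure_pmf ?\<Omega>). (\<Sum>p\<in>I. X p x) \<ge> mu + s}"
      using Meq gX EgX unfolding mu_def by auto
    have "measure_pmf.prob ?\<Omega> ?E = measure_pmf.prob ?\<Omega> (?E \<inter> set_pmf ?\<Omega>)"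
      by (rule measure_Int_set_pmf[symmetric])
    also have "\<dots> \<le> measure_pmf.prob ?\<Omega> {x \<in> space (measure_pmf ?\<Omega>). (\<Sum>p\<in>I. X p x) \<ge> mu + s}"
      by (rule measure_pmf.finite_measure_mono[OF sub]) simp
    also have "\<dots> \<le> exp (- 2 * s\<^sup>2 / (\<Sum>p\<in>I. (c p - - c p)\<^sup>2))" by (rule hoeff)
    also have "\<dots> \<le> exp (- (real K * s\<^sup>2 / 5))"
    proof -
      have a: "(vnorm u)\<^sup>2 \<le> 25/16" 
      proof -
        have "(vnorm u)\<^sup>2 \<le> (5/4)\<^sup>2" using u(2) vnorm_nonneg[of u] by (intro power_mono) auto
        thus ?thesis by (simp add: power2_eq_square)
      qed
      have b: "(vnorm v)\<^sup>2 \<le> 25/16" 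
      proof -
        have "(vnorm v)\<^sup>2 \<le> (5/4)\<^sup>2" using v(2) vnorm_nonneg[of v] by (intro power_mono) auto
        thus ?thesis by (simp add: power2_eq_square)
      qed
      have ab2: "(vnorm u)\<^sup>2 * (vnorm v)\<^sup>2 \<le> 25/16 * (25/16)"
        using a b by (intro mult_mono) auto
      have "real K * s\<^sup>2 / 5 \<le> 2 * s\<^sup>2 / (4 * (vnorm u)\<^sup>2 * (vnorm v)\<^sup>2 / real K)"
      proof -
        have "2 * s\<^sup>2 / (4 * (vnorm u)\<^sup>2 * (vnorm v)\<^sup>2 / real K) = real K * s\<^sup>2 / (2 * ((vnorm u)\<^sup>2 * (vnorm v)\<^sup>2))"
          using Kp ab by (simp add: field_simps)
        moreover have "real K * s\<^sup>2 / 5 \<le> real K * s\<^sup>2 / (2 * ((vnorm u)\<^sup>2 * (vnorm v)\<^sup>2))"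
          using ab ab2 Kp s by (intro divide_left_mono) auto
        ultimately show ?thesis by simp
      qed
      thus ?thesis unfolding sumsq by simp
    qed
    finally show ?thesis .
  qed
qed


lemma three_pow_le: "(3::real) ^ (6 * n) \<le> exp (8 * real n)"
proof -
  have "1 + 4/3 + (4/3)\<^sup>2 / 2 \<le> exp (4/3::real)" by (rule exp_lower_Taylor_quadratic) simp
  hence e: "3 \<le> exp (4/3::real)" by (simp add: power2_eq_square)
  have "(3::real) ^ (6 * n) \<le> exp (4/3) ^ (6 * n)" using e by (intro power_mono) auto
  also have "\<dots> = exp (real (6 * n) * (4/3))" by (simp add: exp_of_nat_mult[symmetric])
  also have "real (6 * n) * (4/3) = 8 * real n" by simp
  finally show ?thesis .
qed

lemma main_bound:
  fixes d T K :: nat and D :: "real vec pmf" and Ths :: "real mat" and eps :: real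
  assumes K: "K \<ge> 1" and Th: "Ths \<in> carrier_mat T d" and d1: "d \<ge> 1" and T1: "T \<ge> 1"
  and hy: "\<forall>t<T. \<forall>w\<in>set_pmf D. 0 \<le> row Ths t \<bullet> w \<and> row Ths t \<bullet> w \<le> 1"
  and hD: "\<forall>w\<in>set_pmf D. w \<in> carrier_vec d \<and> vnorm w \<le> 1"
  and eps: "eps > 0"
  shows "measure_pmf.prob (sample_space d T K D)
      {\<omega>. \<not> spec_norm (Theta0_hat d T K Ths \<omega> - Theta0_mean d T K D Ths) \<le> eps}
    \<le> exp (8 * real (T + d) - real K * eps\<^sup>2 / 30)"
proof -
  let ?\<Omega> = "sample_space d T K D"
  let ?M = "\<lambda>\<omega>. Theta0_hat d T K Ths \<omega> - Theta0_mean d T K D Ths"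
  define s where "s = 7 / 16 * eps"
  have s: "s > 0" unfolding s_def using eps by simp
  define N where "N = net d \<times> net T"
  have Nd: "is_net d (net d)" by (rule net_is_net[OF d1])
  have NT: "is_net T (net T)" by (rule net_is_net[OF T1])
  have finN: "finite N" unfolding N_def using Nd NT unfolding is_net_def by auto
  define A where "A p = {\<omega>. fst p \<bullet> (?M \<omega> *\<^sub>v snd p) \<ge> s}" for p
  have sub: "{\<omega>. \<not> spec_norm (?M \<omega>) \<le> eps} \<subseteq> (\<Union>p\<in>N. A p)"
  proof
    fix \<omega> assume w: "\<omega> \<in> {\<omega>. \<not> spec_norm (?M \<omega>) \<le> eps}"
    show "\<omega> \<in> (\<Union>p\<in>N. A p)"
    proof (rule ccontr)
      assume "\<omega> \<notin> (\<Union>p\<in>N. A p)"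
      hence H: "u \<bullet> (?M \<omega> *\<^sub>v v) \<le> s" if "u \<in> net d" "v \<in> net T" for u v
        using that unfolding A_def N_def by force
      have Mc: "?M \<omega> \<in> carrier_mat d T" by (intro minus_carrier_mat mean_carrier)
      have "spec_norm (?M \<omega>) \<le> 16/7 * s" by (rule net_spec_bound[OF Mc Nd NT less_imp_le[OF s] H])
      thus False using w unfolding s_def by simp
    qed
  qed
  have each: "measure_pmf.prob ?\<Omega> (A p) \<le> exp (- (real K * s\<^sup>2 / 5))" if p: "p \<in> N" for p
  proof -
    obtain u v where uv: "p = (u, v)" "u \<in> net d" "v \<in> net T" using p unfolding N_def by auto
    have u: "u \<in> carrier_vec d" "vnorm u \<le> 5/4" using Nd uv unfolding is_net_def by auto
    have v: "v \<in> carrier_vec T" "vnorm v \<le> 5/4" using NT uv unfolding is_net_def by auto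
    show ?thesis unfolding A_def uv(1) fst_conv snd_conv by (rule bil_tail[OF K Th hy hD u v s])
  qed
  have cardN: "real (card N) \<le> exp (8 * real (T + d))"
  proof -
    have "card N = card (net d) * card (net T)" unfolding N_def by (simp add: card_cartesian_product)
    also have "\<dots> \<le> 3 ^ (6 * d) * 3 ^ (6 * T)" by (intro mult_le_mono net_card)
    also have "\<dots> = 3 ^ (6 * (T + d))" by (simp add: power_add[symmetric] algebra_simps)
    finally have "real (card N) \<le> (3::real) ^ (6 * (T + d))"
      by (metis of_nat_le_iff of_nat_numeral of_nat_power)
    also have "\<dots> \<le> exp (8 * real (T + d))" by (rule three_pow_le)
    finally show ?thesis .
  qed
  have "measure_pmf.prob ?\<Omega> {\<omega>. \<not> spec_norm (?M \<omega>) \<le> eps} \<le> measure_pmf.prob ?\<Omega> (\<Union>p\<in>N. A p)"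
    by (rule measure_pmf.finite_measure_mono[OF sub]) simp
  also have "\<dots> \<le> (\<Sum>p\<in>N. measure_pmf.prob ?\<Omega> (A p))"
    by (rule measure_pmf.finite_measure_subadditive_finite[OF finN]) auto
  also have "\<dots> \<le> (\<Sum>p\<in>N. exp (- (real K * s\<^sup>2 / 5)))" by (rule sum_mono[OF each])
  also have "\<dots> = real (card N) * exp (- (real K * s\<^sup>2 / 5))" by simp
  also have "\<dots> \<le> exp (8 * real (T + d)) * exp (- (real K * eps\<^sup>2 / 30))"
  proof (intro mult_mono cardN)
    have "0 \<le> real K * eps\<^sup>2" by simp
    hence "real K * eps\<^sup>2 / 30 \<le> real K * s\<^sup>2 / 5" unfolding s_def
      by (simp add: power2_eq_square field_simps)
    thus "exp (- (real K * s\<^sup>2 / 5)) \<le> exp (- (real K * eps\<^sup>2 / 30))" by simp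
  qed auto
  also have "\<dots> = exp (8 * real (T + d) - real K * eps\<^sup>2 / 30)" by (simp add: exp_add[symmetric])
  finally show ?thesis .
qed

theorem lemma1:
  "\<exists>c::real. c > 0 \<and>
    (\<forall>(d::nat) (T::nat) (K::nat) (r::nat) (D::real vec pmf) (Ths::real mat)
        (\<zeta>::real) (\<xi>::real) (\<delta>\<^sub>0::real).
      K \<ge> 1 \<longrightarrow>
      Ths \<in> carrier_mat T d \<longrightarrow>
      mat_rank T Ths = r \<longrightarrow> 0 < r \<longrightarrow> 2 * r \<le> min T d \<longrightarrow>
      (\<forall>t<T. vnorm (row Ths t) \<le> sqrt (real d)) \<longrightarrow>
      (\<forall>t<T. \<forall>v\<in>set_pmf D. 0 \<le> scalar_prod (row Ths t) v \<and> scalar_prod (row Ths t) v \<le> 1) \<longrightarrow>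
      (\<forall>v\<in>set_pmf D. v \<in> carrier_vec d \<and> vnorm v \<le> 1) \<longrightarrow>
      \<zeta> > 0 \<longrightarrow> \<xi> > 0 \<longrightarrow>
      (\<forall>x\<in>carrier_vec d. vnorm x = 1 \<longrightarrow>
         measure_pmf.expectation D (\<lambda>v. \<bar>scalar_prod v x\<bar>) \<ge> \<zeta> / sqrt (real d)) \<longrightarrow>
      loewner_le d (second_moment d D) ((1 / (real d * \<xi>\<^sup>2)) \<cdot>\<^sub>m 1\<^sub>m d) \<longrightarrow>
      \<delta>\<^sub>0 > 0 \<longrightarrow>
      (let \<epsilon>\<^sub>3 = (0.1::real); \<sigma> = sigma_min Ths in
       measure_pmf.prob (sample_space d T K D)
         {\<omega>. spec_norm (Theta0_hat d T K Ths \<omega> - Theta0_mean d T K D Ths)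
               \<le> 0.1 * \<delta>\<^sub>0 * (\<zeta>\<^sup>2 / real d) * \<sigma>}
       \<ge> 1 - exp (real (T + d) - c * \<epsilon>\<^sub>3\<^sup>2 * \<delta>\<^sub>0\<^sup>2 * real K * (\<zeta>^4 / (real d)\<^sup>2) * \<sigma>\<^sup>2)))"
proof (rule exI[of _ "1/300"], intro conjI allI impI)
  show "(0::real) < 1/300" by simp
next
  fix d T K r :: nat and D :: "real vec pmf" and Ths :: "real mat" and \<zeta> \<xi> \<delta>\<^sub>0 :: real
  assume K: "K \<ge> 1" and Th: "Ths \<in> carrier_mat T d" and rk: "mat_rank T Ths = r" and r0: "0 < r"
    and r2: "2 * r \<le> min T d"
    and hy: "\<forall>t<T. \<forall>v\<in>set_pmf D. 0 \<le> row Ths t \<bullet> v \<and> row Ths t \<bullet> v \<le> 1"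
    and hD: "\<forall>v\<in>set_pmf D. v \<in> carrier_vec d \<and> vnorm v \<le> 1"
    and z: "\<zeta> > 0" and del: "\<delta>\<^sub>0 > 0"
  have d1: "d \<ge> 1" and T1: "T \<ge> 1" using r0 r2 by auto
  have sig: "sigma_min Ths > 0" using sigma_pos[OF Th] rk r0 by simp
  define eps where "eps = 0.1 * \<delta>\<^sub>0 * (\<zeta>\<^sup>2 / real d) * sigma_min Ths"
  have eps: "eps > 0" unfolding eps_def using del z sig d1 by simp
  define n where "n = real (T + d)"
  define Y where "Y = 1/300 * real K * eps\<^sup>2"
  have Yeq: "1/300 * (0.1::real)\<^sup>2 * \<delta>\<^sub>0\<^sup>2 * real K * (\<zeta>^4 / (real d)\<^sup>2) * (sigma_min Ths)\<^sup>2 = Y"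
  proof -
    have z4: "\<zeta>^4 = (\<zeta>\<^sup>2)\<^sup>2" by (simp add: power_mult[symmetric])
    show ?thesis unfolding Y_def eps_def z4 by (simp add: power2_eq_square field_simps)
  qed
  let ?\<Omega> = "sample_space d T K D"
  let ?G = "{\<omega>. spec_norm (Theta0_hat d T K Ths \<omega> - Theta0_mean d T K D Ths) \<le> eps}"
  have bad: "measure_pmf.prob ?\<Omega> (UNIV - ?G) \<le> exp (8 * n - real K * eps\<^sup>2 / 30)"
  proof -
    have "UNIV - ?G = {\<omega>. \<not> spec_norm (Theta0_hat d T K Ths \<omega> - Theta0_mean d T K D Ths) \<le> eps}" by auto
    thus ?thesis unfolding n_def using main_bound[OF K Th d1 T1 hy hD eps] by simp
  qed
  have good: "measure_pmf.prob ?\<Omega> ?G \<ge> 1 - exp (n - Y)"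
  proof (cases "n - Y \<ge> 0")
    case True
    hence "exp (n - Y) \<ge> 1" by simp
    thus ?thesis using measure_nonneg[of "measure_pmf ?\<Omega>" ?G] by linarith
  next
    case False
    have n0: "n \<ge> 0" unfolding n_def by simp
    have "8 * n - real K * eps\<^sup>2 / 30 \<le> n - Y" using False n0 unfolding Y_def by simp
    hence "exp (8 * n - real K * eps\<^sup>2 / 30) \<le> exp (n - Y)" by simp
    moreover have "measure_pmf.prob ?\<Omega> (UNIV - ?G) = 1 - measure_pmf.prob ?\<Omega> ?G"
      using measure_pmf.prob_compl[of ?G "?\<Omega>"] by simp
    ultimately show ?thesis using bad by linarith
  qed
  show "let \<epsilon>\<^sub>3 = (0.1::real); \<sigma> = sigma_min Ths in
       measure_pmf.prob (sample_space d T K D)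
         {\<omega>. spec_norm (Theta0_hat d T K Ths \<omega> - Theta0_mean d T K D Ths)
               \<le> 0.1 * \<delta>\<^sub>0 * (\<zeta>\<^sup>2 / real d) * \<sigma>}
       \<ge> 1 - exp (real (T + d) - 1/300 * \<epsilon>\<^sub>3\<^sup>2 * \<delta>\<^sub>0\<^sup>2 * real K * (\<zeta>^4 / (real d)\<^sup>2) * \<sigma>\<^sup>2)"
    unfolding Let_def Yeq using good unfolding n_def eps_def by simp
qed


end
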